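(* Let $(X,\rho)$ be a symmetric quandle, $Y$ an $(X,\rho)$-set, $A$ an abelian group, and $\theta$ a $2$-cocycle of $C^*_{\rm Q}(X,A)_Y$. If $\theta$ is cohomologous in $C^*_{\rm Q}(X,A)_Y$ to a $2$-cocycle satisfying the symmetric quandle $2$-cocycle conditions, then the invariant $\Phi^{\rm ori}_\theta$ does not depend on the orientation of a link: for any link diagram $D$ and any two orientations $D^+$, $D^{+\prime}$ of $D$, $\Phi^{\rm ori}_\theta(D^+)=\Phi^{\rm ori}_\theta(D^{+\prime})$.
   Context: A quandle is a set $X$ with a binary operation $(x,y)\mapsto x^y$ such that $x^x=x$; for all $x,y$ there is a unique $z$ with $z^y=x$ (written $x^{y^{-1}}$); and $(x^y)^z=(x^z)^{(y^z)}$. A good involution is a map $\rho:X\to X$ with $\rho\circ\rho={\rm id}$, $\rho(x^y)=\rho(x)^y$, $x^{\rho(y)}=x^{y^{-1}}$; $(X,\rho)$ is a symmetric quandle. The associated group $G_{(X,\rho)}$ has generators $X$ and relations $x^y=y^{-1}xy$, $\rho(x)=x^{-1}$. An $(X,\rho)$-set is a set $Y$ with a right action of $G_{(X,\rho)}$; write $y^x$ for the action of $x\in X$ on $y\in Y$. For $n\ge1$ let $C_n(X)_Y$ be free abelian on $Y\times X^n$ ($C_0$ free abelian on $Y$, zero in negative degrees) with $\partial_n(y,x_1,\dots,x_n)=\sum_{i=1}^n(-1)^i\{(y,x_1,\dots,\widehat{x_i},\dots,x_n)-(y^{x_i},x_1^{x_i},\dots,x_{i-1}^{x_i},\widehat{x_i},x_{i+1},\dots,x_n)\}$.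 Let $D^{\rm Q}_n$ be generated by tuples with $x_i=x_{i+1}$ for some $i$; $C^{\rm Q}_*(X)_Y=C_*(X)_Y/D^{\rm Q}_*$ and $C^*_{\rm Q}(X,A)_Y={\rm Hom}(C^{\rm Q}_*(X)_Y,A)$. A map $\theta:Y\times X^2\to A$ (extended linearly) satisfies the symmetric quandle $2$-cocycle conditions if (1) for all $(y,x_1,x_2,x_3)$: $-\theta(y,x_2,x_3)+\theta(y^{x_1},x_2,x_3)+\theta(y,x_1,x_3)-\theta(y^{x_2},x_1^{x_2},x_3)-\theta(y,x_1,x_2)+\theta(y^{x_3},x_1^{x_3},x_2^{x_3})=0$; (2) $\theta(y,x,x)=0$ for all $(y,x)$; (3) $\theta(y,x_1,x_2)+\theta(y^{x_1},\rho(x_1),x_2)=0$ and $\theta(y,x_1,x_2)+\theta(y^{x_2},x_1^{x_2},\rho(x_2))=0$ for all $(y,x_1,x_2)$. Such a $\theta$ is in particular a $2$-cocycle of $C^*_{\rm Q}(X,A)_Y$. For an oriented link diagram $D^+\subset\mathbb{R}^2$: semi-arcs are the arcs obtained by cutting the over-arcs at crossings; each semi-arc gets the normal orientation with (orientation vector, normal vector) a positive basis. An $X_Y$-coloring assigns an element of $X$ to each semi-arc and of $Y$ to each complementary region so that at each crossing the two over semi-arcs have the same label, the under semi-arcs labeled $x_1,x_2$ with the over normal pointing from the $x_1$-side to the $x_2$-side and over label $x_3$ satisfy $x_1^{x_3}=x_2$, and a semi-arc labeled $x$ whose normal points from a region labeled $y_1$ to one labeled $y_2$ satisfies $y_1^x=y_2$.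 The weight of a crossing $v$ is $\epsilon(y,x_1,x_2)$ where $y$ is the label of the region from which the normals of the under semi-arc (label $x_1$) and over semi-arc (label $x_2$) facing it both point away, and $\epsilon=+1$ if (over normal, under normal) is a positive basis of $\mathbb{R}^2$ and $-1$ otherwise. $c_{D^+,C}$ is the sum of weights over all crossings, and $\Phi^{\rm ori}_\theta(D^+)=\{\theta(c_{D^+,C})\mid C\text{ an }X_Y\text{-coloring of }D^+\}$ as a multi-set. *)

theory Defs
  imports Main "HOL-Library.FuncSet" "HOL-Library.Equipollence"
begin

text \<open>The quandle X is the whole type 'x, with operation q x y = x^y.\<close>

definition quandle :: "('x \<Rightarrow> 'x \<Rightarrow> 'x) \<Rightarrow> bool" where
  "quandle q \<longleftrightarrow>
     (\<forall>x. q x x = x) \<and>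
     (\<forall>x y. \<exists>!z. q z y = x) \<and>
     (\<forall>x y z. q (q x y) z = q (q x z) (q y z))"

text \<open>x^(y^-1) is the unique z with z^y = x.\<close>
definition qinv :: "('x \<Rightarrow> 'x \<Rightarrow> 'x) \<Rightarrow> 'x \<Rightarrow> 'x \<Rightarrow> 'x" where
  "qinv q x y = (THE z. q z y = x)"

definition good_involution :: "('x \<Rightarrow> 'x \<Rightarrow> 'x) \<Rightarrow> ('x \<Rightarrow> 'x) \<Rightarrow> bool" where
  "good_involution q \<rho> \<longleftrightarrow>
     (\<forall>x. \<rho> (\<rho> x) = x) \<and>
     (\<forall>x y. \<rho> (q x y) = q (\<rho> x) y) \<and>
     (\<forall>x y. q x (\<rho> y) = qinv q x y)"

definition symmetric_quandle :: "('x \<Rightarrow> 'x \<Rightarrow> 'x) \<Rightarrow> ('x \<Rightarrow> 'x) \<Rightarrow> bool" where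
  "symmetric_quandle q \<rho> \<longleftrightarrow> quandle q \<and> good_involution q \<rho>"

text \<open>An (X,rho)-set: a right action of the associated group G_(X,rho) on the type 'y,
  given by the actions act y x = y^x of the generators x; these must be bijections
  satisfying the defining relations x^z = z^-1 x z and rho(x) = x^-1 of the group.\<close>
definition xrho_set :: "('x \<Rightarrow> 'x \<Rightarrow> 'x) \<Rightarrow> ('x \<Rightarrow> 'x) \<Rightarrow> ('y \<Rightarrow> 'x \<Rightarrow> 'y) \<Rightarrow> bool" where
  "xrho_set q \<rho> act \<longleftrightarrow>
     (\<forall>x. bij (\<lambda>y. act y x)) \<and>
     (\<forall>y x z. act (act y z) (q x z) = act (act y x) z) \<and>
     (\<forall>y x. act (act y x) (\<rho> x) = y)"

text \<open>1-cochains of C^*_Q are arbitrary maps f : Y x X -> A; their coboundary is f composed with boundary_2.\<close>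
definition delta1 :: "('x \<Rightarrow> 'x \<Rightarrow> 'x) \<Rightarrow> ('y \<Rightarrow> 'x \<Rightarrow> 'y) \<Rightarrow> ('y \<Rightarrow> 'x \<Rightarrow> 'a::ab_group_add)
                      \<Rightarrow> 'y \<Rightarrow> 'x \<Rightarrow> 'x \<Rightarrow> 'a" where
  "delta1 q act f y x1 x2 =
     - (f y x2 - f (act y x1) x2) + (f y x1 - f (act y x2) (q x1 x2))"

text \<open>theta composed with boundary_3 evaluated at (y,x1,x2,x3).\<close>
definition delta2 :: "('x \<Rightarrow> 'x \<Rightarrow> 'x) \<Rightarrow> ('y \<Rightarrow> 'x \<Rightarrow> 'y) \<Rightarrow> ('y \<Rightarrow> 'x \<Rightarrow> 'x \<Rightarrow> 'a::ab_group_add)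
                      \<Rightarrow> 'y \<Rightarrow> 'x \<Rightarrow> 'x \<Rightarrow> 'x \<Rightarrow> 'a" where
  "delta2 q act \<theta> y x1 x2 x3 =
     - \<theta> y x2 x3 + \<theta> (act y x1) x2 x3 + \<theta> y x1 x3 - \<theta> (act y x2) (q x1 x2) x3
     - \<theta> y x1 x2 + \<theta> (act y x3) (q x1 x3) (q x2 x3)"

text \<open>2-cocycle of C^*_Q(X,A)_Y: a map on Y x X^2 vanishing on degenerate tuples
  (i.e. a cochain of the quotient complex) with vanishing coboundary.\<close>
definition Q_2cocycle :: "('x \<Rightarrow> 'x \<Rightarrow> 'x) \<Rightarrow> ('y \<Rightarrow> 'x \<Rightarrow> 'y) \<Rightarrow> ('y \<Rightarrow> 'x \<Rightarrow> 'x \<Rightarrow> 'a::ab_group_add) \<Rightarrow> bool" where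
  "Q_2cocycle q act \<theta> \<longleftrightarrow>
     (\<forall>y x. \<theta> y x x = 0) \<and> (\<forall>y x1 x2 x3. delta2 q act \<theta> y x1 x2 x3 = 0)"

definition Q_cohomologous :: "('x \<Rightarrow> 'x \<Rightarrow> 'x) \<Rightarrow> ('y \<Rightarrow> 'x \<Rightarrow> 'y)
      \<Rightarrow> ('y \<Rightarrow> 'x \<Rightarrow> 'x \<Rightarrow> 'a::ab_group_add) \<Rightarrow> ('y \<Rightarrow> 'x \<Rightarrow> 'x \<Rightarrow> 'a) \<Rightarrow> bool" where
  "Q_cohomologous q act \<theta> \<theta>' \<longleftrightarrow>
     (\<exists>f. \<forall>y x1 x2. \<theta> y x1 x2 - \<theta>' y x1 x2 = delta1 q act f y x1 x2)"

definition sym_2cocycle :: "('x \<Rightarrow> 'x \<Rightarrow> 'x) \<Rightarrow> ('x \<Rightarrow> 'x) \<Rightarrow> ('y \<Rightarrow> 'x \<Rightarrow> 'y)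
      \<Rightarrow> ('y \<Rightarrow> 'x \<Rightarrow> 'x \<Rightarrow> 'a::ab_group_add) \<Rightarrow> bool" where
  "sym_2cocycle q \<rho> act \<theta> \<longleftrightarrow>
     (\<forall>y x1 x2 x3. delta2 q act \<theta> y x1 x2 x3 = 0) \<and>
     (\<forall>y x. \<theta> y x x = 0) \<and>
     (\<forall>y x1 x2. \<theta> y x1 x2 + \<theta> (act y x1) (\<rho> x1) x2 = 0) \<and>
     (\<forall>y x1 x2. \<theta> y x1 x2 + \<theta> (act y x2) (q x1 x2) (\<rho> x2) = 0)"

text \<open>An (unoriented) link diagram is described combinatorially:
  arcs = semi-arcs (edges of the projection, including crossingless circles),
  regs = complementary regions, crs = crossings.
  Each semi-arc carries an arbitrary reference direction; lreg s / rreg s are the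
  regions on its left / right with respect to this reference direction.
  At a crossing c, pos c i (i = 0,1,2,3, in counterclockwise order around c) is the
  semi-arc end at position i: (s, False) = the reference-start of s, (s, True) = its
  reference-end.  Positions 0,2 form the under strand, positions 1,3 the over strand.\<close>
record ('s, 'r, 'c) udiagram =
  arcs :: "'s set"
  regs :: "'r set"
  crs :: "'c set"
  lreg :: "'s \<Rightarrow> 'r"
  rreg :: "'s \<Rightarrow> 'r"
  pos :: "'c \<Rightarrow> nat \<Rightarrow> 's \<times> bool"

text \<open>Region on the counterclockwise / clockwise side of the ray from the crossing
  along the semi-arc end e.\<close>
definition ccw_reg :: "('s, 'r, 'c) udiagram \<Rightarrow> 's \<times> bool \<Rightarrow> 'r" where
  "ccw_reg D e = (if snd e then rreg D (fst e) else lreg D (fst e))"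

definition cw_reg :: "('s, 'r, 'c) udiagram \<Rightarrow> 's \<times> bool \<Rightarrow> 'r" where
  "cw_reg D e = (if snd e then lreg D (fst e) else rreg D (fst e))"

definition ends :: "('s, 'r, 'c) udiagram \<Rightarrow> ('s \<times> bool) set" where
  "ends D = (\<lambda>(c, i). pos D c i) ` (crs D \<times> {..<4})"

definition wf_diagram :: "('s, 'r, 'c) udiagram \<Rightarrow> bool" where
  "wf_diagram D \<longleftrightarrow>
     finite (arcs D) \<and> finite (regs D) \<and> finite (crs D) \<and>
     (\<forall>s\<in>arcs D. lreg D s \<in> regs D \<and> rreg D s \<in> regs D) \<and>
     (\<forall>c\<in>crs D. \<forall>i<4. fst (pos D c i) \<in> arcs D) \<and>
     inj_on (\<lambda>(c, i). pos D c i) (crs D \<times> {..<4}) \<and>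
     (\<forall>s\<in>arcs D. ((s, False) \<in> ends D) = ((s, True) \<in> ends D)) \<and>
     (\<forall>c\<in>crs D. \<forall>i<4. ccw_reg D (pos D c i) = cw_reg D (pos D c (Suc i mod 4))) \<and>
     (arcs D \<noteq> {} \<longrightarrow> regs D = lreg D ` arcs D \<union> rreg D ` arcs D) \<and>
     (arcs D = {} \<longrightarrow> card (regs D) = 1)"

text \<open>An orientation assigns to each semi-arc whether its direction agrees (True) with
  the reference direction; it must be coherent along both strands at every crossing.\<close>
definition incoming :: "('s \<Rightarrow> bool) \<Rightarrow> 's \<times> bool \<Rightarrow> bool" where
  "incoming ori e \<longleftrightarrow> (snd e = ori (fst e))"

definition is_orientation :: "('s, 'r, 'c) udiagram \<Rightarrow> ('s \<Rightarrow> bool) \<Rightarrow> bool" where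
  "is_orientation D ori \<longleftrightarrow>
     (\<forall>c\<in>crs D. \<forall>i<2. incoming ori (pos D c i) \<noteq> incoming ori (pos D c (i + 2)))"

definition oleft :: "('s, 'r, 'c) udiagram \<Rightarrow> ('s \<Rightarrow> bool) \<Rightarrow> 's \<Rightarrow> 'r" where
  "oleft D ori s = (if ori s then lreg D s else rreg D s)"

definition oright :: "('s, 'r, 'c) udiagram \<Rightarrow> ('s \<Rightarrow> bool) \<Rightarrow> 's \<Rightarrow> 'r" where
  "oright D ori s = (if ori s then rreg D s else lreg D s)"

text \<open>Positions at crossing c (w.r.t. orientation ori): the outgoing over position,
  the under position on the right side of the over strand (its semi-arc carries x1),
  and the under position on its left side (carrying x2).\<close>
definition over_out :: "('s, 'r, 'c) udiagram \<Rightarrow> ('s \<Rightarrow> bool) \<Rightarrow> 'c \<Rightarrow> nat" where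
  "over_out D ori c = (if incoming ori (pos D c 1) then 3 else 1)"

definition under_right :: "('s, 'r, 'c) udiagram \<Rightarrow> ('s \<Rightarrow> bool) \<Rightarrow> 'c \<Rightarrow> nat" where
  "under_right D ori c = (over_out D ori c + 3) mod 4"

definition under_left :: "('s, 'r, 'c) udiagram \<Rightarrow> ('s \<Rightarrow> bool) \<Rightarrow> 'c \<Rightarrow> nat" where
  "under_left D ori c = (over_out D ori c + 1) mod 4"

text \<open>Sign epsilon of crossing c: +1 (True) iff (over normal, under normal) is a
  positive basis, i.e. iff the under strand passes from the right to the left of the
  over strand.\<close>
definition cr_sign :: "('s, 'r, 'c) udiagram \<Rightarrow> ('s \<Rightarrow> bool) \<Rightarrow> 'c \<Rightarrow> bool" where
  "cr_sign D ori c \<longleftrightarrow> incoming ori (pos D c (under_right D ori c))"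

text \<open>X_Y-colorings of the oriented diagram (D, ori): labels of semi-arcs and regions,
  extensional outside the diagram.  The normal of a semi-arc points to its left.\<close>
definition coloring :: "('x \<Rightarrow> 'x \<Rightarrow> 'x) \<Rightarrow> ('y \<Rightarrow> 'x \<Rightarrow> 'y) \<Rightarrow> ('s, 'r, 'c) udiagram
      \<Rightarrow> ('s \<Rightarrow> bool) \<Rightarrow> ('s \<Rightarrow> 'x) \<times> ('r \<Rightarrow> 'y) \<Rightarrow> bool" where
  "coloring q act D ori C \<longleftrightarrow>
     (let xs = fst C; yr = snd C in
       xs \<in> extensional (arcs D) \<and> yr \<in> extensional (regs D) \<and>
       (\<forall>s\<in>arcs D. act (yr (oright D ori s)) (xs s) = yr (oleft D ori s)) \<and>
       (\<forall>c\<in>crs D.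
          xs (fst (pos D c 1)) = xs (fst (pos D c 3)) \<and>
          q (xs (fst (pos D c (under_right D ori c)))) (xs (fst (pos D c 1)))
            = xs (fst (pos D c (under_left D ori c)))))"

text \<open>theta(c_{D,C}) = sum over crossings of epsilon * theta(y, x1, x2), where y is the
  region to the right of both strands (= right region of the under semi-arc on the right
  side of the over strand), x1 its label and x2 the over label.\<close>
definition theta_val :: "('y \<Rightarrow> 'x \<Rightarrow> 'x \<Rightarrow> 'a::ab_group_add) \<Rightarrow> ('s, 'r, 'c) udiagram
      \<Rightarrow> ('s \<Rightarrow> bool) \<Rightarrow> ('s \<Rightarrow> 'x) \<times> ('r \<Rightarrow> 'y) \<Rightarrow> 'a" where
  "theta_val \<theta> D ori C =
     (\<Sum>c\<in>crs D.
        (let s1 = fst (pos D c (under_right D ori c));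
             v = \<theta> (snd C (oright D ori s1)) (fst C s1) (fst C (fst (pos D c 1)))
         in if cr_sign D ori c then v else - v))"

text \<open>The multiset Phi^ori_theta(D,ori), represented by its fibres: Phi_fibre ... a is the
  set of colorings C with theta(c_{D,C}) = a, whose cardinality is the multiplicity of a.\<close>
definition Phi_fibre :: "('x \<Rightarrow> 'x \<Rightarrow> 'x) \<Rightarrow> ('y \<Rightarrow> 'x \<Rightarrow> 'y) \<Rightarrow> ('y \<Rightarrow> 'x \<Rightarrow> 'x \<Rightarrow> 'a::ab_group_add)
      \<Rightarrow> ('s, 'r, 'c) udiagram \<Rightarrow> ('s \<Rightarrow> bool) \<Rightarrow> 'a \<Rightarrow> (('s \<Rightarrow> 'x) \<times> ('r \<Rightarrow> 'y)) set" where
  "Phi_fibre q act \<theta> D ori a = {C. coloring q act D ori C \<and> theta_val \<theta> D ori C = a}"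

definition Phi_eq :: "('x \<Rightarrow> 'x \<Rightarrow> 'x) \<Rightarrow> ('y \<Rightarrow> 'x \<Rightarrow> 'y) \<Rightarrow> ('y \<Rightarrow> 'x \<Rightarrow> 'x \<Rightarrow> 'a::ab_group_add)
      \<Rightarrow> ('s, 'r, 'c) udiagram \<Rightarrow> ('s \<Rightarrow> bool) \<Rightarrow> ('s \<Rightarrow> bool) \<Rightarrow> bool" where
  "Phi_eq q act \<theta> D o1 o2 \<longleftrightarrow>
     (\<forall>a. Phi_fibre q act \<theta> D o1 a \<approx> Phi_fibre q act \<theta> D o2 a)"

end

theory Submission
  imports Defs
begin

lemma qinv_q: assumes "quandle q" shows "qinv q (q x y) y = x"
  using assms unfolding quandle_def qinv_def by (metis (mono_tags, lifting) the_equality)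

definition tm :: "('y \<Rightarrow> 'x \<Rightarrow> 'x \<Rightarrow> 'a::ab_group_add) \<Rightarrow> bool \<Rightarrow> bool \<Rightarrow> bool \<Rightarrow> 'y \<Rightarrow> 'y \<Rightarrow> 'x \<Rightarrow> 'x \<Rightarrow> 'x \<Rightarrow> 'a" where
  "tm \<theta> b0 b1 b2 Y0 Y2 x0 x1 x2 = (if (if b1 then b2 else b0) then \<theta> (if b1 then Y2 else Y0) (if b1 then x2 else x0) x1
           else - \<theta> (if b1 then Y2 else Y0) (if b1 then x2 else x0) x1)"

lemma core2:
  fixes \<theta>' :: "'y \<Rightarrow> 'x \<Rightarrow> 'x \<Rightarrow> 'a::ab_group_add"
  assumes SQ: "symmetric_quandle q \<rho>" and XS: "xrho_set q \<rho> act" and S: "sym_2cocycle q \<rho> act \<theta>'"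
  and B: "b1 \<noteq> b3" "b0 \<noteq> b2" and X: "x1 = x3"
  and E0: "if b0 then act r0 x0 = r3 else act r3 x0 = r0"
  and E1: "if b1 then act r1 x1 = r0 else act r0 x1 = r1"
  and E2: "if b2 then act r2 x2 = r1 else act r1 x2 = r2"
  and E3: "if b3 then act r3 x3 = r2 else act r2 x3 = r3"
  and Q: "if b1 then q x2 x1 = x0 else q x0 x1 = x2"
  shows "tm \<theta>' (b0 \<noteq> fu) (b1 \<noteq> fo) (b2 \<noteq> fu)
            (if b0 \<noteq> fu then r0 else r3) (if b2 \<noteq> fu then r2 else r1)
            (if fu then \<rho> x0 else x0) (if fo then \<rho> x1 else x1) (if fu then \<rho> x2 else x2)
       = tm \<theta>' b0 b1 b2 (if b0 then r0 else r3) (if b2 then r2 else r1) x0 x1 x2"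
proof -
  have rr: "\<And>x. \<rho> (\<rho> x) = x" and rq: "\<And>x y. \<rho> (q x y) = q (\<rho> x) y"
    and qr: "\<And>x y. q x (\<rho> y) = qinv q x y"
    using SQ unfolding symmetric_quandle_def good_involution_def by auto
  have qq: "\<And>x y. qinv q (q x y) y = x" using SQ qinv_q unfolding symmetric_quandle_def by metis
  have a1: "\<And>y x z. act (act y z) (q x z) = act (act y x) z"
    and a2: "\<And>y x. act (act y x) (\<rho> x) = y" using XS unfolding xrho_set_def by auto
  have s1: "\<And>y a b. \<theta>' (act y a) (\<rho> a) b = - \<theta>' y a b"
   and s2: "\<And>y a b. \<theta>' (act y b) (q a b) (\<rho> b) = - \<theta>' y a b"
    using S unfolding sym_2cocycle_def by (metis add_eq_0_iff)+
  show ?thesis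
  proof (cases b1; cases b2; cases fo; cases fu)
  qed (use B X E0 E1 E2 E3 Q in \<open>auto simp: tm_def rr rq qr qq a1 a2 s1 s2\<close>)
qed


lemma core:
  fixes \<theta> \<theta>' :: "'y \<Rightarrow> 'x \<Rightarrow> 'x \<Rightarrow> 'a::ab_group_add"
  assumes B: "b1 \<noteq> b3" "b0 \<noteq> b2" and X: "x1 = x3"
  and E0: "if b0 then act r0 x0 = r3 else act r3 x0 = r0"
  and E1: "if b1 then act r1 x1 = r0 else act r0 x1 = r1"
  and E2: "if b2 then act r2 x2 = r1 else act r1 x2 = r2"
  and E3: "if b3 then act r3 x3 = r2 else act r2 x3 = r3"
  and Y: "Y0 = (if b0 then r0 else r3)" "Y1 = (if b1 then r1 else r0)"
         "Y2 = (if b2 then r2 else r1)" "Y3 = (if b3 then r3 else r2)"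
  and Q: "if b1 then q x2 x1 = x0 else q x0 x1 = x2"
  and T: "\<And>y a b. \<theta> y a b - \<theta>' y a b = delta1 q act f y a b"
  shows "tm \<theta> b0 b1 b2 Y0 Y2 x0 x1 x2 = tm \<theta>' b0 b1 b2 Y0 Y2 x0 x1 x2
         + ((if b0 then f Y0 x0 else - f Y0 x0) + (if b1 then f Y1 x1 else - f Y1 x1)
          + (if b2 then f Y2 x2 else - f Y2 x2) + (if b3 then f Y3 x3 else - f Y3 x3))"
proof -
  have T': "\<And>y a b. \<theta> y a b = \<theta>' y a b + delta1 q act f y a b" using T by (metis diff_add_cancel add.commute)
  show ?thesis
  proof (cases b1; cases b2)
    assume "b1" "b2"
    then show ?thesis using B X E0 E1 E2 E3 Y Q by (auto simp: tm_def T' delta1_def algebra_simps)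
  next
    assume "b1" "\<not>b2"
    then show ?thesis using B X E0 E1 E2 E3 Y Q by (auto simp: tm_def T' delta1_def algebra_simps)
  next
    assume "\<not>b1" "b2"
    then show ?thesis using B X E0 E1 E2 E3 Y Q by (auto simp: tm_def T' delta1_def algebra_simps)
  next
    assume "\<not>b1" "\<not>b2"
    then show ?thesis using B X E0 E1 E2 E3 Y Q by (auto simp: tm_def T' delta1_def algebra_simps)
  qed
qed




lemma end_regs:
  "ccw_reg D e = (if incoming ori e then oright D ori (fst e) else oleft D ori (fst e))"
  "cw_reg D e = (if incoming ori e then oleft D ori (fst e) else oright D ori (fst e))"
  by (cases e; auto simp: ccw_reg_def cw_reg_def incoming_def oright_def oleft_def)+

lemma col_arc:
  assumes "coloring q act D ori C" "s \<in> arcs D"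
  shows "act (snd C (oright D ori s)) (fst C s) = snd C (oleft D ori s)"
  using assms unfolding coloring_def Let_def by auto

lemma endE:
  assumes "coloring q act D ori C" "fst e \<in> arcs D"
  shows "(if incoming ori e then act (snd C (ccw_reg D e)) (fst C (fst e)) = snd C (cw_reg D e)
          else act (snd C (cw_reg D e)) (fst C (fst e)) = snd C (ccw_reg D e))"
    "snd C (oright D ori (fst e)) = (if incoming ori e then snd C (ccw_reg D e) else snd C (cw_reg D e))"
  using col_arc[OF assms] by (auto simp: end_regs[of D e ori])

definition cterm :: "('y \<Rightarrow> 'x \<Rightarrow> 'x \<Rightarrow> 'a::ab_group_add) \<Rightarrow> ('s, 'r, 'c) udiagram
      \<Rightarrow> ('s \<Rightarrow> bool) \<Rightarrow> ('s \<Rightarrow> 'x) \<times> ('r \<Rightarrow> 'y) \<Rightarrow> 'c \<Rightarrow> 'a" where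
  "cterm \<theta> D ori C c = (let s1 = fst (pos D c (under_right D ori c));
             v = \<theta> (snd C (oright D ori s1)) (fst C s1) (fst C (fst (pos D c 1)))
         in if cr_sign D ori c then v else - v)"

lemma theta_val_cterm: "theta_val \<theta> D ori C = (\<Sum>c\<in>crs D. cterm \<theta> D ori C c)"
  unfolding theta_val_def cterm_def ..

lemma ur_ul: "under_right D ori c = (if incoming ori (pos D c 1) then 2 else 0)"
   "under_left D ori c = (if incoming ori (pos D c 1) then 0 else 2)"
  by (auto simp: under_right_def under_left_def over_out_def)

lemma cterm_tm: "cterm \<theta> D ori C c = tm \<theta> (incoming ori (pos D c 0)) (incoming ori (pos D c 1)) (incoming ori (pos D c 2))
   (snd C (oright D ori (fst (pos D c 0)))) (snd C (oright D ori (fst (pos D c 2))))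
   (fst C (fst (pos D c 0))) (fst C (fst (pos D c 1))) (fst C (fst (pos D c 2)))"
  unfolding cterm_def tm_def Let_def cr_sign_def ur_ul by auto

definition hterm :: "('y \<Rightarrow> 'x \<Rightarrow> 'a::ab_group_add) \<Rightarrow> ('s, 'r, 'c) udiagram
      \<Rightarrow> ('s \<Rightarrow> bool) \<Rightarrow> ('s \<Rightarrow> 'x) \<times> ('r \<Rightarrow> 'y) \<Rightarrow> 's \<times> bool \<Rightarrow> 'a" where
  "hterm f D ori C e = (if incoming ori e then f (snd C (oright D ori (fst e))) (fst C (fst e))
      else - f (snd C (oright D ori (fst e))) (fst C (fst e)))"

lemma sum4: "(\<Sum>i<(4::nat). g i) = g 0 + g 1 + g 2 + (g 3 :: 'a::ab_group_add)"
  by (simp add: eval_nat_numeral)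

lemma wf_D:
  assumes "wf_diagram D"
  shows "finite (crs D)" "\<And>c i. c \<in> crs D \<Longrightarrow> i < 4 \<Longrightarrow> fst (pos D c i) \<in> arcs D"
    "inj_on (\<lambda>(c, i). pos D c i) (crs D \<times> {..<4})"
    "\<And>s. s \<in> arcs D \<Longrightarrow> ((s, False) \<in> ends D) = ((s, True) \<in> ends D)"
    "\<And>c i. c \<in> crs D \<Longrightarrow> i < 4 \<Longrightarrow> ccw_reg D (pos D c i) = cw_reg D (pos D c (Suc i mod 4))"
proof -
  have F: "finite (crs D)" using assms unfolding wf_diagram_def by (elim conjE) assumption
  have A: "\<forall>c\<in>crs D. \<forall>i<4. fst (pos D c i) \<in> arcs D" using assms unfolding wf_diagram_def by (elim conjE) assumption
  have I: "inj_on (\<lambda>(c, i). pos D c i) (crs D \<times> {..<4})" using assms unfolding wf_diagram_def by (elim conjE) assumption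
  have B: "\<forall>s\<in>arcs D. ((s, False) \<in> ends D) = ((s, True) \<in> ends D)" using assms unfolding wf_diagram_def by (elim conjE) assumption
  have R: "\<forall>c\<in>crs D. \<forall>i<4. ccw_reg D (pos D c i) = cw_reg D (pos D c (Suc i mod 4))" using assms unfolding wf_diagram_def by (elim conjE) assumption
  show "finite (crs D)" "inj_on (\<lambda>(c, i). pos D c i) (crs D \<times> {..<4})" using F I .
  show "\<And>c i. c \<in> crs D \<Longrightarrow> i < 4 \<Longrightarrow> fst (pos D c i) \<in> arcs D" using A by blast
  show "\<And>s. s \<in> arcs D \<Longrightarrow> ((s, False) \<in> ends D) = ((s, True) \<in> ends D)" using B by blast
  show "\<And>c i. c \<in> crs D \<Longrightarrow> i < 4 \<Longrightarrow> ccw_reg D (pos D c i) = cw_reg D (pos D c (Suc i mod 4))" using R by blast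
qed

lemma wf_facts:
  assumes "wf_diagram D" "c \<in> crs D"
  shows "\<And>i. i < 4 \<Longrightarrow> fst (pos D c i) \<in> arcs D"
   "cw_reg D (pos D c 1) = ccw_reg D (pos D c 0)"
   "cw_reg D (pos D c 2) = ccw_reg D (pos D c 1)"
   "cw_reg D (pos D c 3) = ccw_reg D (pos D c 2)"
   "cw_reg D (pos D c 0) = ccw_reg D (pos D c 3)"
proof -
  note h = wf_D(5)[OF assms(1) assms(2)]
  show "\<And>i. i < 4 \<Longrightarrow> fst (pos D c i) \<in> arcs D" using wf_D(2)[OF assms] .
  have m: "Suc 0 mod 4 = (1::nat)" "Suc 1 mod 4 = (2::nat)" "Suc 2 mod 4 = (3::nat)" "Suc 3 mod 4 = (0::nat)"
    by simp_all
  show "cw_reg D (pos D c 1) = ccw_reg D (pos D c 0)" by (rule sym, rule h[of 0, unfolded m]) simp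
  show "cw_reg D (pos D c 2) = ccw_reg D (pos D c 1)" by (rule sym, rule h[of 1, unfolded m]) simp
  show "cw_reg D (pos D c 3) = ccw_reg D (pos D c 2)" by (rule sym, rule h[of 2, unfolded m]) simp
  show "cw_reg D (pos D c 0) = ccw_reg D (pos D c 3)" by (rule sym, rule h[of 3, unfolded m]) simp
qed

lemma orient_facts:
  assumes "is_orientation D ori" "c \<in> crs D"
  shows "incoming ori (pos D c 1) \<noteq> incoming ori (pos D c 3)"
    "incoming ori (pos D c 0) \<noteq> incoming ori (pos D c 2)"
proof -
  have O: "\<forall>i<2. incoming ori (pos D c i) \<noteq> incoming ori (pos D c (i + 2))"
    using assms unfolding is_orientation_def by auto
  show "incoming ori (pos D c 1) \<noteq> incoming ori (pos D c 3)"
  proof -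
    have e: "(1::nat) + 2 = 3" by simp
    show ?thesis using O[rule_format, of 1] unfolding e by simp
  qed
  show "incoming ori (pos D c 0) \<noteq> incoming ori (pos D c 2)"
    using O[rule_format, of 0, unfolded add_0] by simp
qed

lemma dec:
  fixes \<theta> \<theta>' :: "'y \<Rightarrow> 'x \<Rightarrow> 'x \<Rightarrow> 'a::ab_group_add"
  assumes W: "wf_diagram D" and O: "is_orientation D ori" and Cc: "coloring q act D ori C"
    and c: "c \<in> crs D"
    and T: "\<And>y a b. \<theta> y a b - \<theta>' y a b = delta1 q act f y a b"
  shows "cterm \<theta> D ori C c = cterm \<theta>' D ori C c + (\<Sum>i<4. hterm f D ori C (pos D c i))"
proof -
  note wf = wf_facts[OF W c]
  have a: "fst (pos D c 0) \<in> arcs D" "fst (pos D c 1) \<in> arcs D" "fst (pos D c 2) \<in> arcs D" "fst (pos D c 3) \<in> arcs D"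
    using wf(1) by auto
  have cr: "fst C (fst (pos D c 1)) = fst C (fst (pos D c 3))"
     "q (fst C (fst (pos D c (under_right D ori c)))) (fst C (fst (pos D c 1)))
            = fst C (fst (pos D c (under_left D ori c)))"
    using Cc c unfolding coloring_def Let_def by auto
  note E0 = endE[OF Cc a(1)] and E1 = endE[OF Cc a(2)] and E2 = endE[OF Cc a(3)] and E3 = endE[OF Cc a(4)]
  note of = orient_facts[OF O c]
  have Q: "if incoming ori (pos D c 1) then q (fst C (fst (pos D c 2))) (fst C (fst (pos D c 1))) = fst C (fst (pos D c 0))
           else q (fst C (fst (pos D c 0))) (fst C (fst (pos D c 1))) = fst C (fst (pos D c 2))"
    using cr(2) by (auto simp: ur_ul)
  define r0 where "r0 = snd C (ccw_reg D (pos D c 0))"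
  define r1 where "r1 = snd C (ccw_reg D (pos D c 1))"
  define r2 where "r2 = snd C (ccw_reg D (pos D c 2))"
  define r3 where "r3 = snd C (ccw_reg D (pos D c 3))"
  have e0: "if incoming ori (pos D c 0) then act r0 (fst C (fst (pos D c 0))) = r3 else act r3 (fst C (fst (pos D c 0))) = r0"
    using E0(1)[unfolded wf(5)] unfolding r0_def r3_def by simp
  have e1: "if incoming ori (pos D c 1) then act r1 (fst C (fst (pos D c 1))) = r0 else act r0 (fst C (fst (pos D c 1))) = r1"
    using E1(1)[unfolded wf(2)] unfolding r0_def r1_def by simp
  have e2: "if incoming ori (pos D c 2) then act r2 (fst C (fst (pos D c 2))) = r1 else act r1 (fst C (fst (pos D c 2))) = r2"
    using E2(1)[unfolded wf(3)] unfolding r2_def r1_def by simp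
  have e3: "if incoming ori (pos D c 3) then act r3 (fst C (fst (pos D c 3))) = r2 else act r2 (fst C (fst (pos D c 3))) = r3"
    using E3(1)[unfolded wf(4)] unfolding r2_def r3_def by simp
  have y0: "snd C (oright D ori (fst (pos D c 0))) = (if incoming ori (pos D c 0) then r0 else r3)"
    using E0(2)[unfolded wf(5)] unfolding r0_def r3_def by simp
  have y1: "snd C (oright D ori (fst (pos D c 1))) = (if incoming ori (pos D c 1) then r1 else r0)"
    using E1(2)[unfolded wf(2)] unfolding r0_def r1_def by simp
  have y2: "snd C (oright D ori (fst (pos D c 2))) = (if incoming ori (pos D c 2) then r2 else r1)"
    using E2(2)[unfolded wf(3)] unfolding r2_def r1_def by simp
  have y3: "snd C (oright D ori (fst (pos D c 3))) = (if incoming ori (pos D c 3) then r3 else r2)"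
    using E3(2)[unfolded wf(4)] unfolding r2_def r3_def by simp
  show ?thesis
    unfolding cterm_tm sum4 hterm_def
    by (rule core[OF of(1) of(2) cr(1) e0 e1 e2 e3 y0 y1 y2 y3 Q T])
qed



lemma telescope:
  assumes W: "wf_diagram D"
  shows "(\<Sum>c\<in>crs D. \<Sum>i<(4::nat). hterm f D ori C (pos D c i)) = 0"
proof -
  let ?h = "hterm f D ori C"
  have fin: "finite (crs D)" using wf_D(1)[OF W] .
  have inj: "inj_on (\<lambda>(c, i). pos D c i) (crs D \<times> {..<4})" using wf_D(3)[OF W] .
  have "(\<Sum>c\<in>crs D. \<Sum>i<(4::nat). ?h (pos D c i)) = (\<Sum>p\<in>crs D \<times> {..<4}. ?h ((\<lambda>(c, i). pos D c i) p))"
    by (simp add: sum.cartesian_product case_prod_beta)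
  also have "\<dots> = (\<Sum>e\<in>ends D. ?h e)"
    unfolding ends_def by (simp add: sum.reindex[OF inj] o_def)
  also have "ends D = (fst ` ends D) \<times> UNIV"
  proof
    show "ends D \<subseteq> fst ` ends D \<times> UNIV" by (auto simp: image_iff) (metis fst_conv surjective_pairing)
  next
    show "fst ` ends D \<times> UNIV \<subseteq> ends D"
    proof clarify
      fix a b e assume e: "e \<in> ends D"
      then obtain c i where ci: "c \<in> crs D" "i < 4" "e = pos D c i" unfolding ends_def by auto
      have "fst e \<in> arcs D" using wf_D(2)[OF W ci(1,2)] ci(3) by simp
      hence "((fst e, False) \<in> ends D) = ((fst e, True) \<in> ends D)" using wf_D(4)[OF W] by blast
      moreover have "(fst e, snd e) \<in> ends D" using e by simp
      ultimately show "(fst e, b) \<in> ends D" by (cases b; cases "snd e") auto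
    qed
  qed
  also have "(\<Sum>e\<in>fst ` ends D \<times> UNIV. ?h e) = (\<Sum>s\<in>fst ` ends D. \<Sum>b\<in>UNIV. ?h (s, b))"
    by (simp add: sum.cartesian_product)
  also have "\<dots> = 0"
    by (rule sum.neutral) (auto simp: UNIV_bool hterm_def incoming_def)
  finally show ?thesis .
qed


lemma oright_end: "oright D ori (fst e) = (if incoming ori e then ccw_reg D e else cw_reg D e)"
  by (cases e; auto simp: ccw_reg_def cw_reg_def incoming_def oright_def oleft_def)

lemma coreQ:
  assumes SQ: "symmetric_quandle q \<rho>"
  and B: "b1 \<noteq> b3" "b0 \<noteq> b2" and X: "x1 = x3"
  and Q: "if b1 then q x2 x1 = x0 else q x0 x1 = x2"
  shows "if (b1 \<noteq> fo) then q (if fu then \<rho> x2 else x2) (if fo then \<rho> x1 else x1) = (if fu then \<rho> x0 else x0)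
         else q (if fu then \<rho> x0 else x0) (if fo then \<rho> x1 else x1) = (if fu then \<rho> x2 else x2)"
proof -
  have rr: "\<And>x. \<rho> (\<rho> x) = x" and rq: "\<And>x y. \<rho> (q x y) = q (\<rho> x) y"
    and qr: "\<And>x y. q x (\<rho> y) = qinv q x y"
    using SQ unfolding symmetric_quandle_def good_involution_def by auto
  have qq: "\<And>x y. qinv q (q x y) y = x" using SQ qinv_q unfolding symmetric_quandle_def by metis
  show ?thesis
    by (cases b1; cases fo; cases fu) (use Q in \<open>auto simp: rr rq qr qq\<close>)
qed

definition flipC :: "('x \<Rightarrow> 'x) \<Rightarrow> ('s, 'r, 'c) udiagram \<Rightarrow> ('s \<Rightarrow> bool) \<Rightarrow> ('s \<Rightarrow> bool)
   \<Rightarrow> ('s \<Rightarrow> 'x) \<times> ('r \<Rightarrow> 'y) \<Rightarrow> ('s \<Rightarrow> 'x) \<times> ('r \<Rightarrow> 'y)" where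
  "flipC \<rho> D o1 o2 C = ((\<lambda>s. if s \<in> arcs D \<and> o1 s \<noteq> o2 s then \<rho> (fst C s) else fst C s), snd C)"

lemma flip_flip:
  assumes "symmetric_quandle q \<rho>"
  shows "flipC \<rho> D o1 o2 (flipC \<rho> D o1 o2 C) = C"
proof -
  have rr: "\<And>x. \<rho> (\<rho> x) = x"
    using assms unfolding symmetric_quandle_def good_involution_def by auto
  show ?thesis unfolding flipC_def by (cases C) (auto simp: rr)
qed

lemma inc2: "incoming o2 e = (incoming o1 e \<noteq> (o1 (fst e) \<noteq> o2 (fst e)))"
  unfolding incoming_def by auto

lemma flips_eq:
  assumes "is_orientation D o1" "is_orientation D o2" "c \<in> crs D"
  shows "(o1 (fst (pos D c 0)) \<noteq> o2 (fst (pos D c 0))) = (o1 (fst (pos D c 2)) \<noteq> o2 (fst (pos D c 2)))"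
    "(o1 (fst (pos D c 1)) \<noteq> o2 (fst (pos D c 1))) = (o1 (fst (pos D c 3)) \<noteq> o2 (fst (pos D c 3)))"
proof -
  have O: "\<forall>i<2. incoming o1 (pos D c i) \<noteq> incoming o1 (pos D c (i + 2))"
       "\<forall>i<2. incoming o2 (pos D c i) \<noteq> incoming o2 (pos D c (i + 2))"
    using assms unfolding is_orientation_def by auto
  have "incoming o1 (pos D c 0) \<noteq> incoming o1 (pos D c 2)" "incoming o2 (pos D c 0) \<noteq> incoming o2 (pos D c 2)"
     "incoming o1 (pos D c 1) \<noteq> incoming o1 (pos D c 3)" "incoming o2 (pos D c 1) \<noteq> incoming o2 (pos D c 3)"
    using O(1)[rule_format, of 0] O(1)[rule_format, of 1]
          O(2)[rule_format, of 0] O(2)[rule_format, of 1] by (simp_all add: numeral_2_eq_2 numeral_3_eq_3)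
  thus "(o1 (fst (pos D c 0)) \<noteq> o2 (fst (pos D c 0))) = (o1 (fst (pos D c 2)) \<noteq> o2 (fst (pos D c 2)))"
    "(o1 (fst (pos D c 1)) \<noteq> o2 (fst (pos D c 1))) = (o1 (fst (pos D c 3)) \<noteq> o2 (fst (pos D c 3)))"
    unfolding inc2[of o2 _ o1] by auto
qed


lemma flip_sym: "flipC \<rho> D o2 o1 = flipC \<rho> D o1 o2"
  unfolding flipC_def by (intro ext) auto

lemma flip_col:
  assumes SQ: "symmetric_quandle q \<rho>" and XS: "xrho_set q \<rho> act" and W: "wf_diagram D"
    and O1: "is_orientation D o1" and O2: "is_orientation D o2" and Cc: "coloring q act D o1 C"
  shows "coloring q act D o2 (flipC \<rho> D o1 o2 C)"
proof -
  have a2: "\<And>y x. act (act y x) (\<rho> x) = y" using XS unfolding xrho_set_def by auto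
  let ?F = "flipC \<rho> D o1 o2 C"
  have ext: "fst C \<in> extensional (arcs D)" "snd C \<in> extensional (regs D)"
    using Cc unfolding coloring_def Let_def by auto
  have "fst ?F \<in> extensional (arcs D)" using ext(1) unfolding flipC_def extensional_def by auto
  moreover have "snd ?F \<in> extensional (regs D)" using ext(2) unfolding flipC_def by auto
  moreover have "\<forall>s\<in>arcs D. act (snd ?F (oright D o2 s)) (fst ?F s) = snd ?F (oleft D o2 s)"
  proof
    fix s assume s: "s \<in> arcs D"
    note ca = col_arc[OF Cc s]
    show "act (snd ?F (oright D o2 s)) (fst ?F s) = snd ?F (oleft D o2 s)"
    proof (cases "o1 s = o2 s")
      case True
      hence "oright D o2 s = oright D o1 s" "oleft D o2 s = oleft D o1 s"
        unfolding oright_def oleft_def by auto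
      thus ?thesis using ca True s unfolding flipC_def by simp
    next
      case False
      hence "oright D o2 s = oleft D o1 s" "oleft D o2 s = oright D o1 s"
        unfolding oright_def oleft_def by auto
      thus ?thesis using ca False s a2 unfolding flipC_def by (simp del: ca) (metis ca)
    qed
  qed
  moreover have "\<forall>c\<in>crs D.
          fst ?F (fst (pos D c 1)) = fst ?F (fst (pos D c 3)) \<and>
          q (fst ?F (fst (pos D c (under_right D o2 c)))) (fst ?F (fst (pos D c 1)))
            = fst ?F (fst (pos D c (under_left D o2 c)))"
  proof
    fix c assume c: "c \<in> crs D"
    note wf = wf_facts[OF W c]
    have a: "fst (pos D c 0) \<in> arcs D" "fst (pos D c 1) \<in> arcs D" "fst (pos D c 2) \<in> arcs D" "fst (pos D c 3) \<in> arcs D"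
      using wf(1) by auto
    have cr: "fst C (fst (pos D c 1)) = fst C (fst (pos D c 3))"
       "q (fst C (fst (pos D c (under_right D o1 c)))) (fst C (fst (pos D c 1)))
            = fst C (fst (pos D c (under_left D o1 c)))"
      using Cc c unfolding coloring_def Let_def by auto
    have Q: "if incoming o1 (pos D c 1) then q (fst C (fst (pos D c 2))) (fst C (fst (pos D c 1))) = fst C (fst (pos D c 0))
           else q (fst C (fst (pos D c 0))) (fst C (fst (pos D c 1))) = fst C (fst (pos D c 2))"
      using cr(2) by (auto simp: ur_ul)
    note of = orient_facts[OF O1 c]
    note fe = flips_eq[OF O1 O2 c]
    note cq = coreQ[OF SQ of(1) of(2) cr(1) Q, of "o1 (fst (pos D c 1)) \<noteq> o2 (fst (pos D c 1))"
                    "o1 (fst (pos D c 0)) \<noteq> o2 (fst (pos D c 0))"]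
    have i1: "incoming o2 (pos D c 1) = (incoming o1 (pos D c 1) \<noteq> (o1 (fst (pos D c 1)) \<noteq> o2 (fst (pos D c 1))))"
      by (rule inc2)
    have x: "fst ?F (fst (pos D c 0)) = (if o1 (fst (pos D c 0)) \<noteq> o2 (fst (pos D c 0)) then \<rho> (fst C (fst (pos D c 0))) else fst C (fst (pos D c 0)))"
      "fst ?F (fst (pos D c 1)) = (if o1 (fst (pos D c 1)) \<noteq> o2 (fst (pos D c 1)) then \<rho> (fst C (fst (pos D c 1))) else fst C (fst (pos D c 1)))"
      "fst ?F (fst (pos D c 2)) = (if o1 (fst (pos D c 0)) \<noteq> o2 (fst (pos D c 0)) then \<rho> (fst C (fst (pos D c 2))) else fst C (fst (pos D c 2)))"
      "fst ?F (fst (pos D c 3)) = (if o1 (fst (pos D c 1)) \<noteq> o2 (fst (pos D c 1)) then \<rho> (fst C (fst (pos D c 3))) else fst C (fst (pos D c 3)))"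
      using a fe unfolding flipC_def by auto
    show "fst ?F (fst (pos D c 1)) = fst ?F (fst (pos D c 3)) \<and>
          q (fst ?F (fst (pos D c (under_right D o2 c)))) (fst ?F (fst (pos D c 1)))
            = fst ?F (fst (pos D c (under_left D o2 c)))"
      unfolding ur_ul[of D o2 c] i1
      using cq x cr(1) by (auto split: if_splits)
  qed
  ultimately show ?thesis unfolding coloring_def Let_def by blast
qed

lemma flip_cterm:
  fixes \<theta>' :: "'y \<Rightarrow> 'x \<Rightarrow> 'x \<Rightarrow> 'a::ab_group_add"
  assumes SQ: "symmetric_quandle q \<rho>" and XS: "xrho_set q \<rho> act" and S: "sym_2cocycle q \<rho> act \<theta>'"
    and W: "wf_diagram D"
    and O1: "is_orientation D o1" and O2: "is_orientation D o2" and Cc: "coloring q act D o1 C"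
    and c: "c \<in> crs D"
  shows "cterm \<theta>' D o2 (flipC \<rho> D o1 o2 C) c = cterm \<theta>' D o1 C c"
proof -
  note wf = wf_facts[OF W c]
  have a: "fst (pos D c 0) \<in> arcs D" "fst (pos D c 1) \<in> arcs D" "fst (pos D c 2) \<in> arcs D" "fst (pos D c 3) \<in> arcs D"
    using wf(1) by auto
  have cr: "fst C (fst (pos D c 1)) = fst C (fst (pos D c 3))"
     "q (fst C (fst (pos D c (under_right D o1 c)))) (fst C (fst (pos D c 1)))
            = fst C (fst (pos D c (under_left D o1 c)))"
    using Cc c unfolding coloring_def Let_def by auto
  note E0 = endE[OF Cc a(1)] and E1 = endE[OF Cc a(2)] and E2 = endE[OF Cc a(3)] and E3 = endE[OF Cc a(4)]
  note of = orient_facts[OF O1 c]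
  note fe = flips_eq[OF O1 O2 c]
  have Q: "if incoming o1 (pos D c 1) then q (fst C (fst (pos D c 2))) (fst C (fst (pos D c 1))) = fst C (fst (pos D c 0))
           else q (fst C (fst (pos D c 0))) (fst C (fst (pos D c 1))) = fst C (fst (pos D c 2))"
    using cr(2) by (auto simp: ur_ul)
  define r0 where "r0 = snd C (ccw_reg D (pos D c 0))"
  define r1 where "r1 = snd C (ccw_reg D (pos D c 1))"
  define r2 where "r2 = snd C (ccw_reg D (pos D c 2))"
  define r3 where "r3 = snd C (ccw_reg D (pos D c 3))"
  have e0: "if incoming o1 (pos D c 0) then act r0 (fst C (fst (pos D c 0))) = r3 else act r3 (fst C (fst (pos D c 0))) = r0"
    using E0(1)[unfolded wf(5)] unfolding r0_def r3_def by simp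
  have e1: "if incoming o1 (pos D c 1) then act r1 (fst C (fst (pos D c 1))) = r0 else act r0 (fst C (fst (pos D c 1))) = r1"
    using E1(1)[unfolded wf(2)] unfolding r0_def r1_def by simp
  have e2: "if incoming o1 (pos D c 2) then act r2 (fst C (fst (pos D c 2))) = r1 else act r1 (fst C (fst (pos D c 2))) = r2"
    using E2(1)[unfolded wf(3)] unfolding r2_def r1_def by simp
  have e3: "if incoming o1 (pos D c 3) then act r3 (fst C (fst (pos D c 3))) = r2 else act r2 (fst C (fst (pos D c 3))) = r3"
    using E3(1)[unfolded wf(4)] unfolding r2_def r3_def by simp
  have y0: "snd C (oright D o1 (fst (pos D c 0))) = (if incoming o1 (pos D c 0) then r0 else r3)"
    using E0(2)[unfolded wf(5)] unfolding r0_def r3_def by simp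
  have y2: "snd C (oright D o1 (fst (pos D c 2))) = (if incoming o1 (pos D c 2) then r2 else r1)"
    using E2(2)[unfolded wf(3)] unfolding r2_def r1_def by simp
  let ?fu = "o1 (fst (pos D c 0)) \<noteq> o2 (fst (pos D c 0))"
  let ?fo = "o1 (fst (pos D c 1)) \<noteq> o2 (fst (pos D c 1))"
  let ?F = "flipC \<rho> D o1 o2 C"
  have i0: "incoming o2 (pos D c 0) = (incoming o1 (pos D c 0) \<noteq> ?fu)" by (rule inc2)
  have i1: "incoming o2 (pos D c 1) = (incoming o1 (pos D c 1) \<noteq> ?fo)" by (rule inc2)
  have i2: "incoming o2 (pos D c 2) = (incoming o1 (pos D c 2) \<noteq> ?fu)" using fe inc2 by metis
  have x: "fst ?F (fst (pos D c 0)) = (if ?fu then \<rho> (fst C (fst (pos D c 0))) else fst C (fst (pos D c 0)))"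
      "fst ?F (fst (pos D c 1)) = (if ?fo then \<rho> (fst C (fst (pos D c 1))) else fst C (fst (pos D c 1)))"
      "fst ?F (fst (pos D c 2)) = (if ?fu then \<rho> (fst C (fst (pos D c 2))) else fst C (fst (pos D c 2)))"
      using a fe unfolding flipC_def by auto
  have y0': "snd ?F (oright D o2 (fst (pos D c 0))) = (if incoming o1 (pos D c 0) \<noteq> ?fu then r0 else r3)"
    unfolding oright_end[of D o2] i0 wf(5) r0_def r3_def by (cases "incoming o1 (pos D c 0)"; cases "o1 (fst (pos D c 0))"; cases "o2 (fst (pos D c 0))"; simp add: flipC_def)
  have y2': "snd ?F (oright D o2 (fst (pos D c 2))) = (if incoming o1 (pos D c 2) \<noteq> ?fu then r2 else r1)"
    unfolding oright_end[of D o2] i2 wf(3) r2_def r1_def by (cases "incoming o1 (pos D c 2)"; cases "o1 (fst (pos D c 0))"; cases "o2 (fst (pos D c 0))"; simp add: flipC_def)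
  show ?thesis
    unfolding cterm_tm y0' y2' x y0 y2 i0 i1 i2
    by (rule core2[OF SQ XS S of(1) of(2) cr(1) e0 e1 e2 e3 Q])
qed

lemma theta_eq:
  fixes \<theta> \<theta>' :: "'y \<Rightarrow> 'x \<Rightarrow> 'x \<Rightarrow> 'a::ab_group_add"
  assumes W: "wf_diagram D" and O: "is_orientation D ori" and Cc: "coloring q act D ori C"
    and T: "\<And>y a b. \<theta> y a b - \<theta>' y a b = delta1 q act f y a b"
  shows "theta_val \<theta> D ori C = theta_val \<theta>' D ori C"
proof -
  have "theta_val \<theta> D ori C = (\<Sum>c\<in>crs D. cterm \<theta>' D ori C c + (\<Sum>i<4. hterm f D ori C (pos D c i)))"
    unfolding theta_val_cterm using dec[OF W O Cc _ T] by (intro sum.cong) auto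
  also have "\<dots> = theta_val \<theta>' D ori C + (\<Sum>c\<in>crs D. \<Sum>i<4. hterm f D ori C (pos D c i))"
    unfolding theta_val_cterm sum.distrib ..
  also have "\<dots> = theta_val \<theta>' D ori C" using telescope[OF W] by simp
  finally show ?thesis .
qed

lemma fib_map:
  fixes \<theta> \<theta>' :: "'y \<Rightarrow> 'x \<Rightarrow> 'x \<Rightarrow> 'a::ab_group_add"
  assumes SQ: "symmetric_quandle q \<rho>" and XS: "xrho_set q \<rho> act" and S: "sym_2cocycle q \<rho> act \<theta>'"
    and W: "wf_diagram D"
    and O1: "is_orientation D o1" and O2: "is_orientation D o2"
    and T: "\<And>y a b. \<theta> y a b - \<theta>' y a b = delta1 q act f y a b"
  shows "flipC \<rho> D o1 o2 ` Phi_fibre q act \<theta> D o1 a \<subseteq> Phi_fibre q act \<theta> D o2 a"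
proof
  fix C' assume "C' \<in> flipC \<rho> D o1 o2 ` Phi_fibre q act \<theta> D o1 a"
  then obtain C where C': "C' = flipC \<rho> D o1 o2 C" and Cc: "coloring q act D o1 C" and v: "theta_val \<theta> D o1 C = a"
    unfolding Phi_fibre_def by auto
  have C2: "coloring q act D o2 C'" using flip_col[OF SQ XS W O1 O2 Cc] C' by simp
  have "theta_val \<theta> D o2 C' = theta_val \<theta>' D o2 C'" by (rule theta_eq[OF W O2 C2 T])
  also have "\<dots> = theta_val \<theta>' D o1 C"
    unfolding theta_val_cterm C' using flip_cterm[OF SQ XS S W O1 O2 Cc] by (intro sum.cong) auto
  also have "\<dots> = a" using theta_eq[OF W O1 Cc T] v by simp
  finally show "C' \<in> Phi_fibre q act \<theta> D o2 a" using C2 unfolding Phi_fibre_def by auto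
qed

theorem corollary6p8:
  fixes q :: "'x \<Rightarrow> 'x \<Rightarrow> 'x" and \<rho> :: "'x \<Rightarrow> 'x" and act :: "'y \<Rightarrow> 'x \<Rightarrow> 'y"
    and \<theta> :: "'y \<Rightarrow> 'x \<Rightarrow> 'x \<Rightarrow> 'a::ab_group_add"
    and D :: "('s, 'r, 'c) udiagram" and o1 o2 :: "'s \<Rightarrow> bool"
  assumes "symmetric_quandle q \<rho>"
    and "xrho_set q \<rho> act"
    and "Q_2cocycle q act \<theta>"
    and "\<exists>\<theta>'. sym_2cocycle q \<rho> act \<theta>' \<and> Q_cohomologous q act \<theta> \<theta>'"
    and "wf_diagram D"
    and "is_orientation D o1"
    and "is_orientation D o2"
  shows "Phi_eq q act \<theta> D o1 o2"
proof -
  obtain \<theta>' where S: "sym_2cocycle q \<rho> act \<theta>'" and H: "Q_cohomologous q act \<theta> \<theta>'" using assms(4) by blast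
  obtain f where T: "\<And>y a b. \<theta> y a b - \<theta>' y a b = delta1 q act f y a b"
    using H unfolding Q_cohomologous_def by blast
  show ?thesis unfolding Phi_eq_def eqpoll_def
  proof
    fix a
    let ?F = "flipC \<rho> D o1 o2"
    have m1: "?F ` Phi_fibre q act \<theta> D o1 a \<subseteq> Phi_fibre q act \<theta> D o2 a"
      by (rule fib_map[OF assms(1,2) S assms(5,6,7) T])
    have m2: "?F ` Phi_fibre q act \<theta> D o2 a \<subseteq> Phi_fibre q act \<theta> D o1 a"
      using fib_map[OF assms(1,2) S assms(5,7,6) T] unfolding flip_sym[of \<rho> D o2 o1] .
    have "bij_betw ?F (Phi_fibre q act \<theta> D o1 a) (Phi_fibre q act \<theta> D o2 a)"
    proof (rule bij_betw_byWitness[where f' = ?F, OF _ _ m1 m2])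
      show "\<forall>x\<in>Phi_fibre q act \<theta> D o1 a. ?F (?F x) = x" using flip_flip[OF assms(1)] by blast
      show "\<forall>x\<in>Phi_fibre q act \<theta> D o2 a. ?F (?F x) = x" using flip_flip[OF assms(1)] by blast
    qed
    thus "\<exists>g. bij_betw g (Phi_fibre q act \<theta> D o1 a) (Phi_fibre q act \<theta> D o2 a)" by blast
  qed
qed


end
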